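(* Let $n\ge1$, $N\ge 1$, $\vec p=(p_1,\ldots,p_{n+1})\in(0,\infty)^{n+1}$, and let $T_1,\ldots,T_N$ be $n$-sublinear operators mapping $L^\infty_0(\mathbb R^d;\mathbb C)^n$ into locally integrable functions, with $\mathbf T=\{T_1,\ldots,T_N\}$. Then for all $(\mathbf f^1,\ldots,\mathbf f^{n+1})\in L^\infty_0(\mathbb R^d;\mathbb C^N)^{n+1}$, \[ |\langle\mathbf T(\mathbf f^1,\ldots,\mathbf f^n),\mathbf f^{n+1}\rangle|\le 2\Big(\sup_{k=1,\ldots,N}\|T_k\|_{\vec p}\Big)\int_{\mathbb R^d}\mathrm M_{\vec p,1}(\mathbf f^1,\ldots,\mathbf f^{n+1})(x)\,dx. \]
   Context: $L^\infty_0$ denotes bounded compactly supported functions. For a cube $Q$, $\langle f\rangle_{p,Q}:=\|f\mathbf 1_Q\|_p/|Q|^{1/p}$. A countable collection $\mathcal Q$ of cubes is sparse if there are pairwise disjoint $E_Q\subset Q$ with $|E_Q|>\frac12|Q|$. The sparse $\vec p$ norm $\|T\|_{\vec p}$ of an $n$-sublinear $T$ is the least $C>0$ such that for all $(g^1,\ldots,g^{n+1})\in L^\infty_0(\mathbb R^d;\mathbb C)^{n+1}$ there is a sparse $\mathcal Q$ with $|\langle T(g^1,\ldots,g^n),g^{n+1}\rangle|\le C\sum_{Q\in\mathcal Q}|Q|\prod_{j=1}^{n+1}\langle g^j\rangle_{p_j,Q}$. For $\mathbf f^j=(f^j_1,\ldots,f^j_N)$, $\langle\mathbf T(\mathbf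 f^1,\ldots,\mathbf f^n),\mathbf f^{n+1}\rangle:=\sum_{k=1}^N\langle T_k(f^1_k,\ldots,f^n_k),f^{n+1}_k\rangle$, and $\mathrm M_{\vec p,1}(\mathbf f^1,\ldots,\mathbf f^{n+1})(x):=\sum_{k=1}^N\sup_Q\prod_{j=1}^{n+1}\langle f^j_k\rangle_{p_j,Q}\mathbf 1_Q(x)$, supremum over all cubes $Q\subset\mathbb R^d$. *)

theory Defs
  imports "HOL-Analysis.Analysis"
begin

text \<open>Ambient space R^d is modelled by a euclidean_space type 'a (d = DIM('a)).\<close>

definition Linf0 :: "('a::euclidean_space \<Rightarrow> complex) \<Rightarrow> bool" where
  "Linf0 f \<longleftrightarrow> f \<in> borel_measurable lebesgue \<and> bounded (range f)
     \<and> (\<exists>K. compact K \<and> (\<forall>x. x \<notin> K \<longrightarrow> f x = 0))"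

definition cubes :: "'a::euclidean_space set set" where
  "cubes = {cbox a (a + r *\<^sub>R One) | a r. r > 0}"

definition avg :: "real \<Rightarrow> ('a::euclidean_space \<Rightarrow> complex) \<Rightarrow> 'a set \<Rightarrow> real" where
  "avg p f Q = (LINT x:Q|lebesgue. norm (f x) powr p) powr (1/p)
               / (measure lebesgue Q) powr (1/p)"

definition sparse :: "'a::euclidean_space set set \<Rightarrow> bool" where
  "sparse \<Q> \<longleftrightarrow> countable \<Q> \<and> \<Q> \<subseteq> cubes \<and>
     (\<exists>E. disjoint_family_on E \<Q> \<and>
        (\<forall>Q\<in>\<Q>. E Q \<subseteq> Q \<and> E Q \<in> sets lebesgue
                 \<and> measure lebesgue (E Q) > measure lebesgue Q / 2))"

definition pair :: "('a::euclidean_space \<Rightarrow> complex) \<Rightarrow> ('a \<Rightarrow> complex) \<Rightarrow> complex" where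
  "pair F G = (LINT x|lebesgue. F x * G x)"

text \<open>An n-sublinear operator on L^infinity_0(R^d;C)^n into locally integrable functions.
  Arguments are indexed 0..n-1 (a function nat => ('a => complex)); T only depends on them.\<close>
definition n_sublinear ::
  "nat \<Rightarrow> ((nat \<Rightarrow> 'a::euclidean_space \<Rightarrow> complex) \<Rightarrow> 'a \<Rightarrow> complex) \<Rightarrow> bool" where
  "n_sublinear n T \<longleftrightarrow>
     (\<forall>g g'. (\<forall>j<n. g j = g' j) \<longrightarrow> T g = T g') \<and>
     (\<forall>g. (\<forall>j<n. Linf0 (g j)) \<longrightarrow>
        T g \<in> borel_measurable lebesgue \<and>
        (\<forall>K. compact K \<longrightarrow> set_integrable lebesgue K (T g))) \<and>
     (\<forall>g j h (c::complex). (\<forall>i<n. Linf0 (g i)) \<and> j < n \<and> Linf0 h \<longrightarrow>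
        (AE x in lebesgue. norm (T (g(j := (\<lambda>y. c * g j y))) x) = norm c * norm (T g x)) \<and>
        (AE x in lebesgue. norm (T (g(j := (\<lambda>y. g j y + h y))) x)
              \<le> norm (T g x) + norm (T (g(j := h)) x)))"

text \<open>Sparse bound with constant C; g n is the dual function g^{n+1}.\<close>
definition sparse_bound ::
  "nat \<Rightarrow> (nat \<Rightarrow> real) \<Rightarrow> ((nat \<Rightarrow> 'a::euclidean_space \<Rightarrow> complex) \<Rightarrow> 'a \<Rightarrow> complex)
     \<Rightarrow> real \<Rightarrow> bool" where
  "sparse_bound n p T C \<longleftrightarrow>
     (\<forall>g. (\<forall>j\<le>n. Linf0 (g j)) \<longrightarrow>
        (\<exists>\<Q>. sparse \<Q> \<and>
           ennreal (norm (pair (T g) (g n)))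
             \<le> ennreal C * (\<integral>\<^sup>+ Q. ennreal (measure lebesgue Q * (\<Prod>j\<le>n. avg (p j) (g j) Q))
                                 \<partial>count_space \<Q>)))"

text \<open>Sparse norm ||T||_p: least C > 0 (infimum; = infinity if no such C).\<close>
definition sparse_norm ::
  "nat \<Rightarrow> (nat \<Rightarrow> real) \<Rightarrow> ((nat \<Rightarrow> 'a::euclidean_space \<Rightarrow> complex) \<Rightarrow> 'a \<Rightarrow> complex) \<Rightarrow> ennreal" where
  "sparse_norm n p T = Inf {ennreal C | C. C > 0 \<and> sparse_bound n p T C}"

text \<open>Vector pairing: f j k is the k-th component of f^{j+1}; components k < N.\<close>
definition vec_pair ::
  "nat \<Rightarrow> nat \<Rightarrow> (nat \<Rightarrow> (nat \<Rightarrow> 'a::euclidean_space \<Rightarrow> complex) \<Rightarrow> 'a \<Rightarrow> complex)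
     \<Rightarrow> (nat \<Rightarrow> nat \<Rightarrow> 'a \<Rightarrow> complex) \<Rightarrow> complex" where
  "vec_pair n N T f = (\<Sum>k<N. pair (T k (\<lambda>j. f j k)) (f n k))"

definition M_max ::
  "nat \<Rightarrow> nat \<Rightarrow> (nat \<Rightarrow> real) \<Rightarrow> (nat \<Rightarrow> nat \<Rightarrow> 'a::euclidean_space \<Rightarrow> complex) \<Rightarrow> 'a \<Rightarrow> ennreal" where
  "M_max n N p f x = (\<Sum>k<N. SUP Q\<in>cubes. ennreal ((\<Prod>j\<le>n. avg (p j) (f j k) Q) * indicator Q x))"

end

theory Submission
  imports Defs
begin

lemma meas_count_nn:
  fixes f :: "'i \<Rightarrow> 'a \<Rightarrow> ennreal"
  assumes "countable I" and meas: "\<And>i. i \<in> I \<Longrightarrow> f i \<in> borel_measurable M"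
  shows "(\<lambda>x. \<integral>\<^sup>+i. f i x \<partial>count_space I) \<in> borel_measurable M"
proof cases
  assume "finite I" then show ?thesis
    using meas by (simp add: nn_integral_count_space_finite)
next
  assume "infinite I"
  then have [simp]: "I \<noteq> {}"
    by auto
  note * = bij_betw_from_nat_into[OF \<open>countable I\<close> \<open>infinite I\<close>]
  have **: "\<And>f. (\<integral>\<^sup>+i. f i \<partial>count_space I) = (\<Sum>n. f (from_nat_into I n))"
    by (simp add: nn_integral_bij_count_space[symmetric, OF *] nn_integral_count_space_nat)
  show ?thesis
    unfolding ** using meas from_nat_into[OF \<open>I \<noteq> {}\<close>]
    by (intro borel_measurable_suminf_order) blast
qed

lemma avg_nonneg: "avg p f Q \<ge> 0"
  unfolding avg_def by (intro divide_nonneg_nonneg) auto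

lemma key:
  assumes sp: "sparse Qs" and a: "\<And>Q. a Q \<ge> (0::real)"
  shows "\<exists>h. h \<in> borel_measurable lebesgue \<and>
     (\<forall>x. h x \<le> (SUP Q\<in>cubes. ennreal (a Q * indicator Q x))) \<and>
     (\<integral>\<^sup>+ Q. ennreal (measure lebesgue Q * a Q) \<partial>count_space Qs)
        \<le> 2 * (\<integral>\<^sup>+ x. h x \<partial>(lebesgue :: 'a::euclidean_space measure))"
proof -
  from sp obtain E where cQ: "countable Qs" and sub: "Qs \<subseteq> cubes" and dis: "disjoint_family_on E Qs"
    and E: "\<And>Q. Q \<in> Qs \<Longrightarrow> E Q \<subseteq> Q \<and> E Q \<in> sets lebesgue
                 \<and> measure lebesgue (E Q) > measure lebesgue Q / 2"
    unfolding sparse_def by blast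
  define h where "h x = (\<integral>\<^sup>+Q. ennreal (a Q) * indicator (E Q) x \<partial>count_space Qs)" for x :: 'a
  have me: "\<And>Q. Q \<in> Qs \<Longrightarrow> (\<lambda>x. ennreal (a Q) * indicator (E Q) x) \<in> borel_measurable lebesgue"
    using E by (auto intro!: borel_measurable_times_ennreal borel_measurable_indicator)
  have hm: "h \<in> borel_measurable lebesgue"
    unfolding h_def using me by (intro meas_count_nn cQ) auto
  have hb: "h x \<le> (SUP Q\<in>cubes. ennreal (a Q * indicator Q x))" for x
  proof (cases "\<exists>Q0\<in>Qs. x \<in> E Q0")
    case True
    then obtain Q0 where Q0: "Q0 \<in> Qs" "x \<in> E Q0" by blast
    have "\<And>Q. Q \<in> Qs \<Longrightarrow> ennreal (a Q) * indicator (E Q) x = ennreal (a Q0) * indicator {Q0} Q"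
      using dis Q0 by (auto simp: disjoint_family_on_def split: split_indicator)
    then have "h x = (\<integral>\<^sup>+Q. ennreal (a Q0) * indicator {Q0} Q \<partial>count_space Qs)"
      unfolding h_def by (intro nn_integral_cong) auto
    also have "\<dots> = ennreal (a Q0)"
      using Q0 by (simp add: nn_integral_cmult_indicator)
    also have "\<dots> = ennreal (a Q0 * indicator Q0 x)"
    proof -
      have "x \<in> Q0" using E[OF Q0(1)] Q0(2) by blast
      then show ?thesis by simp
    qed
    also have "\<dots> \<le> (SUP Q\<in>cubes. ennreal (a Q * indicator Q x))"
      using Q0 sub by (intro SUP_upper) auto
    finally show ?thesis .
  next
    case False
    then have "h x = (\<integral>\<^sup>+Q. 0 \<partial>count_space Qs)"
      unfolding h_def by (intro nn_integral_cong) auto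
    then show ?thesis by simp
  qed
  have "2 * (\<integral>\<^sup>+ x. h x \<partial>lebesgue)
      = 2 * (\<integral>\<^sup>+Q. \<integral>\<^sup>+x. ennreal (a Q) * indicator (E Q) x \<partial>lebesgue \<partial>count_space Qs)"
    unfolding h_def by (subst nn_integral_count_space_nn_integral[OF cQ me]) auto
  also have "\<dots> = 2 * (\<integral>\<^sup>+Q. ennreal (a Q) * emeasure lebesgue (E Q) \<partial>count_space Qs)"
    using E by (intro arg_cong2[where f="(*)"] refl nn_integral_cong) (simp add: nn_integral_cmult_indicator)
  also have "\<dots> = (\<integral>\<^sup>+Q. 2 * (ennreal (a Q) * emeasure lebesgue (E Q)) \<partial>count_space Qs)"
    by (simp add: nn_integral_cmult)
  also have "\<dots> \<ge> (\<integral>\<^sup>+ Q. ennreal (measure lebesgue Q * a Q) \<partial>count_space Qs)"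
  proof (intro nn_integral_mono)
    fix Q assume "Q \<in> space (count_space Qs)"
    then have Q: "Q \<in> Qs" by simp
    have mpos: "measure lebesgue (E Q) > 0"
      using E[OF Q] measure_nonneg[of lebesgue Q] by linarith
    have "emeasure lebesgue (E Q) \<noteq> top"
    proof
      assume "emeasure lebesgue (E Q) = top"
      then have "measure lebesgue (E Q) = 0" by (simp add: measure_def)
      with mpos show False by simp
    qed
    then have eq: "emeasure lebesgue (E Q) = ennreal (measure lebesgue (E Q))"
      by (rule emeasure_eq_ennreal_measure)
    have "measure lebesgue Q * a Q \<le> 2 * (a Q * measure lebesgue (E Q))"
    proof -
      have "measure lebesgue Q \<le> 2 * measure lebesgue (E Q)" using E[OF Q] by linarith
      then have "measure lebesgue Q * a Q \<le> (2 * measure lebesgue (E Q)) * a Q"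
        by (rule mult_right_mono) (rule a)
      then show ?thesis by (simp add: ac_simps)
    qed
    then have "ennreal (measure lebesgue Q * a Q) \<le> ennreal (2 * (a Q * measure lebesgue (E Q)))"
      by (rule ennreal_leI)
    also have "\<dots> = 2 * (ennreal (a Q) * emeasure lebesgue (E Q))"
      using a[of Q] mpos eq by (simp add: ennreal_mult)
    finally show "ennreal (measure lebesgue Q * a Q) \<le> 2 * (ennreal (a Q) * emeasure lebesgue (E Q))" .
  qed
  finally show ?thesis using hm hb by blast
qed

theorem lemma1p3:
  fixes n N :: nat and p :: "nat \<Rightarrow> real"
    and T :: "nat \<Rightarrow> (nat \<Rightarrow> 'a::euclidean_space \<Rightarrow> complex) \<Rightarrow> 'a \<Rightarrow> complex"
    and f :: "nat \<Rightarrow> nat \<Rightarrow> 'a \<Rightarrow> complex"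
  assumes "n \<ge> 1" and "N \<ge> 1"
    and "\<forall>j\<le>n. p j > 0"
    and "\<forall>k<N. n_sublinear n (T k)"
    and "\<forall>j\<le>n. \<forall>k<N. Linf0 (f j k)"
  shows "\<forall>C::real. C > 0 \<and> (SUP k\<in>{..<N}. sparse_norm n p (T k)) \<le> ennreal C \<longrightarrow>
           ennreal (norm (vec_pair n N T f))
             \<le> 2 * ennreal C * (\<integral>\<^sup>+ x. M_max n N p f x \<partial>lebesgue)"
proof (intro allI impI)
  fix C :: real
  assume C: "C > 0 \<and> (SUP k\<in>{..<N}. sparse_norm n p (T k)) \<le> ennreal C"
  define B where "B = (\<integral>\<^sup>+ x. M_max n N p f x \<partial>lebesgue)"
  define a where "a k Q = (\<Prod>j\<le>n. avg (p j) (f j k) Q)" for k Q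
  have anon: "a k Q \<ge> 0" for k Q
    unfolding a_def by (intro prod_nonneg) (auto simp: avg_nonneg)
  have step: "ennreal (norm (vec_pair n N T f)) \<le> 2 * ennreal C' * B" if C': "C' > C" for C'
  proof -
    have "\<forall>k. \<exists>h. k < N \<longrightarrow> (h \<in> borel_measurable lebesgue \<and>
        (\<forall>x. h x \<le> (SUP Q\<in>cubes. ennreal (a k Q * indicator Q x))) \<and>
        ennreal (norm (pair (T k (\<lambda>j. f j k)) (f n k))) \<le> 2 * ennreal C' * (\<integral>\<^sup>+x. h x \<partial>lebesgue))"
    proof (intro allI)
      fix k
      show "\<exists>h. k < N \<longrightarrow> (h \<in> borel_measurable lebesgue \<and>
        (\<forall>x. h x \<le> (SUP Q\<in>cubes. ennreal (a k Q * indicator Q x))) \<and>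
        ennreal (norm (pair (T k (\<lambda>j. f j k)) (f n k))) \<le> 2 * ennreal C' * (\<integral>\<^sup>+x. h x \<partial>lebesgue))"
      proof (cases "k < N")
        case False then show ?thesis by blast
      next
        case k: True
        have "sparse_norm n p (T k) \<le> ennreal C"
          using C k by (meson SUP_upper order_trans lessThan_iff)
        also have "\<dots> < ennreal C'" using C' C by (simp add: ennreal_lessI)
        finally obtain s where "s \<in> {ennreal C0 | C0. C0 > 0 \<and> sparse_bound n p (T k) C0}" "s < ennreal C'"
          unfolding sparse_norm_def by (auto simp: Inf_less_iff)
        then obtain C0 where C0: "C0 > 0" "sparse_bound n p (T k) C0" "ennreal C0 \<le> ennreal C'" by auto
        have lf: "\<And>j. j \<le> n \<Longrightarrow> Linf0 ((\<lambda>j. f j k) j)" using assms(5) k by auto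
        from C0(2)[unfolded sparse_bound_def, rule_format, of "\<lambda>j. f j k", OF lf] obtain Qs where Qs: "sparse Qs"
          and bd: "ennreal (norm (pair (T k (\<lambda>j. f j k)) (f n k))) \<le> ennreal C0 *
             (\<integral>\<^sup>+ Q. ennreal (measure lebesgue Q * a k Q) \<partial>count_space Qs)"
          unfolding a_def by auto
        obtain h where hm: "h \<in> borel_measurable lebesgue"
          and hb: "\<forall>x. h x \<le> (SUP Q\<in>cubes. ennreal (a k Q * indicator Q x))"
          and hi: "(\<integral>\<^sup>+ Q. ennreal (measure lebesgue Q * a k Q) \<partial>count_space Qs)
             \<le> 2 * (\<integral>\<^sup>+ x. h x \<partial>lebesgue)"
          using key[OF Qs, of "a k"] anon by blast
        have "ennreal (norm (pair (T k (\<lambda>j. f j k)) (f n k))) \<le> ennreal C' * (2 * (\<integral>\<^sup>+ x. h x \<partial>lebesgue))"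
          using bd C0(3) hi by (meson mult_mono order_trans zero_le)
        then show ?thesis using hm hb by (auto simp: ac_simps)
      qed
    qed
    from choice[OF this] obtain h where h0: "\<forall>k. k < N \<longrightarrow> (h k \<in> borel_measurable lebesgue \<and>
        (\<forall>x. h k x \<le> (SUP Q\<in>cubes. ennreal (a k Q * indicator Q x))) \<and>
        ennreal (norm (pair (T k (\<lambda>j. f j k)) (f n k))) \<le> 2 * ennreal C' * (\<integral>\<^sup>+x. h k x \<partial>lebesgue))"
      by (elim exE) (rule that)
    note h = h0[rule_format]
    have "ennreal (norm (vec_pair n N T f)) \<le> ennreal (\<Sum>k<N. norm (pair (T k (\<lambda>j. f j k)) (f n k)))"
      unfolding vec_pair_def by (intro ennreal_leI norm_sum)
    also have "\<dots> = (\<Sum>k<N. ennreal (norm (pair (T k (\<lambda>j. f j k)) (f n k))))"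
      by simp
    also have "\<dots> \<le> (\<Sum>k<N. 2 * ennreal C' * (\<integral>\<^sup>+x. h k x \<partial>lebesgue))"
      using h by (intro sum_mono) auto
    also have "\<dots> = 2 * ennreal C' * (\<integral>\<^sup>+x. (\<Sum>k<N. h k x) \<partial>lebesgue)"
    proof -
      have "(\<integral>\<^sup>+x. (\<Sum>k<N. h k x) \<partial>lebesgue) = (\<Sum>k<N. \<integral>\<^sup>+x. h k x \<partial>lebesgue)"
        using h by (intro nn_integral_sum) auto
      then show ?thesis by (simp add: sum_distrib_left)
    qed
    also have "\<dots> \<le> 2 * ennreal C' * B"
      unfolding B_def M_max_def a_def
      using h by (intro mult_left_mono nn_integral_mono sum_mono) (auto simp: a_def)
    finally show ?thesis .
  qed
  define u where "u m = ennreal (C + inverse (real (Suc m)))" for m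
  have "(\<lambda>m. C + inverse (real (Suc m))) \<longlonglongrightarrow> C + 0"
    by (intro tendsto_add tendsto_const LIMSEQ_inverse_real_of_nat)
  then have "u \<longlonglongrightarrow> ennreal C"
    unfolding u_def by (intro tendsto_ennrealI) simp
  then have "(\<lambda>m. 2 * u m) \<longlonglongrightarrow> 2 * ennreal C"
    by (intro tendsto_mult_ennreal tendsto_const) auto
  then have lim: "(\<lambda>m. 2 * u m * B) \<longlonglongrightarrow> 2 * ennreal C * B"
    by (rule tendsto_mult_ennreal[OF _ tendsto_const]) (use C in \<open>auto simp: ennreal_mult_eq_top_iff\<close>)
  have "ennreal (norm (vec_pair n N T f)) \<le> 2 * ennreal C * B"
  proof (rule LIMSEQ_le_const[OF lim], intro exI allI impI)
    fix m :: nat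
    show "ennreal (norm (vec_pair n N T f)) \<le> 2 * u m * B"
      unfolding u_def by (rule step) simp
  qed
  then show "ennreal (norm (vec_pair n N T f)) \<le> 2 * ennreal C * (\<integral>\<^sup>+ x. M_max n N p f x \<partial>lebesgue)"
    by (simp add: B_def)
qed

end
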